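(* Let $\mathfrak k$ be a commutative field, $\mathfrak R=\mathfrak k[x_1,\dots,x_m]_0$ and $\bar{\mathfrak R}=\mathfrak k[x_1,\dots,x_m]\subset\mathfrak R$. Let $I$ be an ideal of $\mathfrak R$ and $\bar I=I\cap\bar{\mathfrak R}$. The injection $\lambda:\bar{\mathfrak R}\hookrightarrow\mathfrak R$ induces an injection of chain-complexes $\lambda:\mathrm{Ksz}_{\bar{\mathfrak R}}(\bar{\mathfrak R}/\bar I)\hookrightarrow\mathrm{Ksz}_{\mathfrak R}(\mathfrak R/I)$, which in turn induces an isomorphism $H_*(\mathrm{Ksz}_{\bar{\mathfrak R}}(\bar{\mathfrak R}/\bar I))\cong H_*(\mathrm{Ksz}_{\mathfrak R}(\mathfrak R/I))$.
   Context: $\mathfrak R$ is the polynomial ring localized at $0\in\mathfrak k^m$ (quotients $P/Q$ with $Q(0)\ne0$). For a ring $S\in\{\bar{\mathfrak R},\mathfrak R\}$ and an $S$-module $M$, the Koszul complex $\mathrm{Ksz}_S(M)$ has $\mathrm{Ksz}_n(M)=M\otimes_{\mathfrak k}\wedge^nV$, $V$ the $\mathfrak k$-vector space with basis $dx_1,\dots,dx_m$, and differential $d(\alpha\,dx_{i_1}\cdots dx_{i_n})=\sum_j(-1)^{j-1}\alpha x_{i_j}\,dx_{i_1}\cdots\widehat{dx_{i_j}}\cdots dx_{i_n}$. *)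

theory Defs
  imports "HOL-Library.Poly_Mapping" "HOL-Computational_Algebra.Fraction_Field"
begin

text \<open>Polynomials k[x_v : v in 'v] : finitely supported maps from monomials
  (exponent vectors 'v =>0 nat) to coefficients.\<close>
type_synonym ('v, 'k) mpoly = "('v \<Rightarrow>\<^sub>0 nat) \<Rightarrow>\<^sub>0 'k"

definition Xvar :: "'v \<Rightarrow> ('v, 'k::zero_neq_one) mpoly" where
  "Xvar i = Poly_Mapping.single (Poly_Mapping.single i 1) 1"

definition eval0 :: "('v, 'k::zero) mpoly \<Rightarrow> 'k" where
  "eval0 p = Poly_Mapping.lookup p 0"

definition locR :: "('v::linorder, 'k::field) mpoly fract set" where
  "locR = {Fract p q | p q. eval0 q \<noteq> 0}"

definition lam :: "('v::linorder, 'k::field) mpoly \<Rightarrow> ('v, 'k) mpoly fract" where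
  "lam p = Fract p 1"

definition ideal_of :: "'a::comm_ring_1 set \<Rightarrow> 'a set \<Rightarrow> bool" where
  "ideal_of S I \<longleftrightarrow> I \<subseteq> S \<and> 0 \<in> I \<and> (\<forall>a\<in>I. \<forall>b\<in>I. a + b \<in> I)
     \<and> (\<forall>r\<in>S. \<forall>a\<in>I. r * a \<in> I)"

text \<open>Koszul complex in coordinates: an element of M (x) wedge^n V is written as
  sum_{|T| = n} c(T) dx_T (dx_T the increasing wedge product), c : n-subsets -> M.
  The differential of the paper gives the coefficient of dx_T in d c as below,
  the sign being (-1)^(j-1) where i is the j-th element of T u {i}.\<close>
definition kdiff :: "('v::{finite,linorder} \<Rightarrow> 'a::comm_ring_1) \<Rightarrow> ('v set \<Rightarrow> 'a) \<Rightarrow> 'v set \<Rightarrow> 'a" where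
  "kdiff x c T = (\<Sum>i\<in>UNIV - T. (-1) ^ card {j\<in>T. j < i} * x i * c (insert i T))"

text \<open>Degree-n chains of Ksz_S(S/I), given by representatives in S (supported on n-subsets).\<close>
definition kchain :: "'a::comm_ring_1 set \<Rightarrow> nat \<Rightarrow> ('v set \<Rightarrow> 'a) \<Rightarrow> bool" where
  "kchain S n c \<longleftrightarrow> (\<forall>T. (card T = n \<longrightarrow> c T \<in> S) \<and> (card T \<noteq> n \<longrightarrow> c T = 0))"

definition kcycle :: "'a::comm_ring_1 set \<Rightarrow> 'a set \<Rightarrow> ('v::{finite,linorder} \<Rightarrow> 'a) \<Rightarrow> nat \<Rightarrow> ('v set \<Rightarrow> 'a) \<Rightarrow> bool" where
  "kcycle S I x n z \<longleftrightarrow> kchain S n z \<and> (\<forall>T. kdiff x z T \<in> I)"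

definition kboundary :: "'a::comm_ring_1 set \<Rightarrow> 'a set \<Rightarrow> ('v::{finite,linorder} \<Rightarrow> 'a) \<Rightarrow> nat \<Rightarrow> ('v set \<Rightarrow> 'a) \<Rightarrow> bool" where
  "kboundary S I x n z \<longleftrightarrow> (\<exists>w. kchain S (Suc n) w \<and> (\<forall>T. z T - kdiff x w T \<in> I))"

end

theory Submission
  imports Defs
begin


lemma pm_induct[case_names zero single add]:
  fixes p :: "'a \<Rightarrow>\<^sub>0 'b::comm_monoid_add"
  assumes "P 0" "\<And>k a. P (Poly_Mapping.single k a)" "\<And>p q. P p \<Longrightarrow> P q \<Longrightarrow> P (p + q)"
  shows "P p"
proof (induction p rule: update_induct)
  case const then show ?case using assms by simp
next
  case (update f a b)
  have "Poly_Mapping.update a b f = f + Poly_Mapping.single a b"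
    using update(1)
    by (intro poly_mapping_eqI) (auto simp: lookup_update lookup_add lookup_single in_keys_iff when_def)
  then show ?case using assms update by simp
qed

lemma eval0_add: "eval0 (p + q) = eval0 p + eval0 q"
  by (simp add: eval0_def lookup_add)

lemma eval0_single: "eval0 (Poly_Mapping.single k a) = (if k = 0 then a else 0)"
  by (simp add: eval0_def lookup_single when_def)

lemma monom_zero_iff: "(k::'v \<Rightarrow>\<^sub>0 nat) + l = 0 \<longleftrightarrow> k = 0 \<and> l = 0"
proof
  assume h: "k + l = 0"
  have "Poly_Mapping.lookup k v = 0 \<and> Poly_Mapping.lookup l v = 0" for v
    using arg_cong[OF h, of "\<lambda>f. Poly_Mapping.lookup f v"] by (simp add: lookup_add)
  then show "k = 0 \<and> l = 0" by (auto intro: poly_mapping_eqI)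
qed simp

lemma eval0_mult: "eval0 ((p::('v,'k::comm_ring_1) mpoly) * q) = eval0 p * eval0 q"
proof (induction p rule: pm_induct)
  case zero then show ?case by (simp add: eval0_def)
next
  case (single k a)
  show ?case
  proof (induction q rule: pm_induct)
    case zero then show ?case by (simp add: eval0_def)
  next
    case (single l b) then show ?case by (auto simp: mult_single eval0_single monom_zero_iff)
  next
    case (add p q) then show ?case by (simp add: distrib_left eval0_add distrib_left)
  qed
next
  case (add p1 p2) then show ?case by (simp add: distrib_right eval0_add)
qed

lemma eval0_one: "eval0 1 = 1" by (simp add: eval0_def)
lemma eval0_diff: "eval0 (p - q) = eval0 p - eval0 q" by (simp add: eval0_def lookup_minus)


definition ksgn :: "'v::linorder \<Rightarrow> 'v set \<Rightarrow> 'a::comm_ring_1" where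
  "ksgn i T = (-1) ^ card {j\<in>T. j < i}"

definition wedge :: "'v::linorder \<Rightarrow> ('v set \<Rightarrow> 'a::comm_ring_1) \<Rightarrow> 'v set \<Rightarrow> 'a" where
  "wedge i c T = (if i \<in> T then ksgn i T * c (T - {i}) else 0)"

lemma card_less_insert:
  fixes T :: "'v::{finite,linorder} set"
  assumes "k \<notin> T"
  shows "card {j\<in>insert k T. j < i} = card {j\<in>T. j < i} + (if k < i then 1 else 0)"
proof -
  have "{j\<in>insert k T. j < i} = (if k < i then insert k {j\<in>T. j < i} else {j\<in>T. j < i})"
    by auto
  then show ?thesis using assms by (simp add: card_insert_disjoint)
qed

lemma ksgn_sq: "ksgn i T * ksgn i T = (1::'a::comm_ring_1)"
  by (simp add: ksgn_def flip: power_add)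

lemma kdiff_def': "kdiff x c T = (\<Sum>k\<in>UNIV - T. ksgn k T * x k * c (insert k T))"
  by (simp add: kdiff_def ksgn_def)

lemma homotopy:
  fixes x :: "'v::{finite,linorder} \<Rightarrow> 'a::comm_ring_1"
  shows "kdiff x (wedge i c) T + wedge i (kdiff x c) T = x i * c T"
proof (cases "i \<in> T")
  case False
  have "kdiff x (wedge i c) T = ksgn i T * x i * wedge i c (insert i T)
      + (\<Sum>k\<in>UNIV - T - {i}. ksgn k T * x k * wedge i c (insert k T))"
    unfolding kdiff_def' using False by (subst sum.remove[of _ i]) auto
  also have "(\<Sum>k\<in>UNIV - T - {i}. ksgn k T * x k * wedge i c (insert k T)) = 0"
    using False by (intro sum.neutral) (auto simp: wedge_def)
  finally have k: "kdiff x (wedge i c) T = ksgn i T * x i * wedge i c (insert i T)" by simp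
  have e: "insert i T - {i} = T" using False by auto
  have s: "ksgn i (insert i T) = (ksgn i T :: 'a)"
    using False unfolding ksgn_def by (subst card_less_insert) auto
  have "wedge i c (insert i T) = ksgn i T * c T" unfolding wedge_def using e s by simp
  then have "kdiff x (wedge i c) T = (ksgn i T * ksgn i T) * x i * c T" using k by (simp add: algebra_simps)
  moreover have "wedge i (kdiff x c) T = 0" using False by (simp add: wedge_def)
  ultimately show ?thesis by (simp only: ksgn_sq mult_1 add_0_right)
next
  case True
  define T' where "T' = T - {i}"
  have iT': "i \<notin> T'" and TT': "T = insert i T'" using True by (auto simp: T'_def)
  have s1: "ksgn i T' = (ksgn i T :: 'a)"
    unfolding ksgn_def TT' by (subst card_less_insert[OF iT']) auto
  have s2: "ksgn k T * ksgn i (insert k T) = - (ksgn i T * ksgn k T' :: 'a)" if "k \<notin> T" for k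
  proof -
    have kT': "k \<notin> T'" and ki: "k \<noteq> i" using that True TT' by auto
    have a: "ksgn i (insert k T) = ksgn i T * (if k < i then -1 else (1::'a))"
      unfolding ksgn_def using that by (subst card_less_insert) auto
    have b: "ksgn k T = ksgn k T' * (if i < k then -1 else (1::'a))"
      unfolding ksgn_def TT' using iT' by (subst card_less_insert) auto
    show ?thesis using ki unfolding a b by (cases "k < i") auto
  qed
  have "wedge i (kdiff x c) T = ksgn i T * (\<Sum>k\<in>insert i (UNIV - T). ksgn k T' * x k * c (insert k T'))"
  proof -
    have "UNIV - T' = insert i (UNIV - T)" using TT' iT' by auto
    then show ?thesis using True unfolding wedge_def kdiff_def' T'_def[symmetric] by simp
  qed
  also have "\<dots> = ksgn i T * (ksgn i T' * x i * c (insert i T')) + (\<Sum>k\<in>UNIV - T. ksgn i T * ksgn k T' * x k * c (insert k T'))"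
    by (simp add: sum.insert distrib_left sum_distrib_left mult.assoc True)
  also have "ksgn i T * (ksgn i T' * x i * c (insert i T')) = x i * c T"
  proof -
    have "ksgn i T * (ksgn i T' * x i * c (insert i T')) = (ksgn i T * ksgn i T) * x i * c T"
      using s1 TT' by (simp add: mult.assoc)
    then show ?thesis by (simp only: ksgn_sq mult_1)
  qed
  finally have w: "wedge i (kdiff x c) T = x i * c T + (\<Sum>k\<in>UNIV - T. ksgn i T * ksgn k T' * x k * c (insert k T'))" .
  have "kdiff x (wedge i c) T = (\<Sum>k\<in>UNIV - T. ksgn k T * x k * (ksgn i (insert k T) * c (insert k T'))) "
    unfolding kdiff_def'
  proof (intro sum.cong refl)
    fix k assume k: "k \<in> UNIV - T"
    then have "insert k T - {i} = insert k T'" using True by (auto simp: T'_def)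
    then show "ksgn k T * x k * wedge i c (insert k T) = ksgn k T * x k * (ksgn i (insert k T) * c (insert k T'))"
      unfolding wedge_def using True by simp
  qed
  also have "\<dots> = - (\<Sum>k\<in>UNIV - T. ksgn i T * ksgn k T' * x k * c (insert k T'))"
    unfolding sum_negf[symmetric]
  proof (intro sum.cong refl)
    fix k assume "k \<in> UNIV - T"
    then have "ksgn k T * ksgn i (insert k T) = - (ksgn i T * ksgn k T' :: 'a)" using s2 by auto
    then show "ksgn k T * x k * (ksgn i (insert k T) * c (insert k T')) = - (ksgn i T * ksgn k T' * x k * c (insert k T'))"
    proof -
      have "ksgn k T * x k * (ksgn i (insert k T) * c (insert k T')) = (ksgn k T * ksgn i (insert k T)) * x k * c (insert k T')"
        by (simp only: mult_ac)
      also have "\<dots> = - (ksgn i T * ksgn k T' * x k * c (insert k T'))" unfolding \<open>ksgn k T * ksgn i (insert k T) = _\<close> by simp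
      finally show ?thesis .
    qed
  qed
  finally show ?thesis using w by simp
qed


lemma kdiff_add: "kdiff x (\<lambda>T. a T + b T) T = kdiff x a T + kdiff x b T"
  by (simp add: kdiff_def distrib_left sum.distrib)

lemma kdiff_smult: "kdiff x (\<lambda>T. r * a T) T = r * kdiff x a T"
  by (simp add: kdiff_def sum_distrib_left mult_ac)

locale kos =
  fixes S :: "'a::comm_ring_1 set" and I :: "'a set" and x :: "'v::{finite,linorder} \<Rightarrow> 'a"
  assumes S0: "0 \<in> S" and S1: "1 \<in> S" and Sm1: "-1 \<in> S"
    and Sadd: "a \<in> S \<Longrightarrow> b \<in> S \<Longrightarrow> a + b \<in> S"
    and Smult: "a \<in> S \<Longrightarrow> b \<in> S \<Longrightarrow> a * b \<in> S"
    and I: "ideal_of S I"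
begin

lemma I0: "0 \<in> I" using I by (simp add: ideal_of_def)
lemma Iadd: "a \<in> I \<Longrightarrow> b \<in> I \<Longrightarrow> a + b \<in> I" using I by (simp add: ideal_of_def)
lemma Imult: "r \<in> S \<Longrightarrow> a \<in> I \<Longrightarrow> r * a \<in> I" using I by (simp add: ideal_of_def)
lemma Ineg: "a \<in> I \<Longrightarrow> - a \<in> I" using Imult[OF Sm1] by fastforce

lemma ksgn_S: "ksgn i T \<in> S"
proof -
  have "(-1::'a) ^ k \<in> S" for k
  proof (induction k)
    case 0 then show ?case using S1 by simp
  next
    case (Suc k)
    have "(-1::'a)^Suc k = (-1) * (-1)^k" by simp
    then show ?case using Smult[OF Sm1 Suc.IH] by simp
  qed
  then show ?thesis by (simp add: ksgn_def)
qed

lemma kboundary_add: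
  assumes "kboundary S I x n a" "kboundary S I x n b"
  shows "kboundary S I x n (\<lambda>T. a T + b T)"
proof -
  obtain w1 where w1: "kchain S (Suc n) w1" "\<And>T. a T - kdiff x w1 T \<in> I"
    using assms(1) by (auto simp: kboundary_def)
  obtain w2 where w2: "kchain S (Suc n) w2" "\<And>T. b T - kdiff x w2 T \<in> I"
    using assms(2) by (auto simp: kboundary_def)
  have "kchain S (Suc n) (\<lambda>T. w1 T + w2 T)" using w1(1) w2(1) by (auto simp: kchain_def intro: Sadd)
  moreover have "a T + b T - kdiff x (\<lambda>T. w1 T + w2 T) T \<in> I" for T
    using Iadd[OF w1(2)[of T] w2(2)[of T]] by (simp add: kdiff_add algebra_simps)
  ultimately show ?thesis unfolding kboundary_def by blast
qed

lemma kboundary_smult: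
  assumes "kboundary S I x n a" "r \<in> S"
  shows "kboundary S I x n (\<lambda>T. r * a T)"
proof -
  obtain w1 where w1: "kchain S (Suc n) w1" "\<And>T. a T - kdiff x w1 T \<in> I"
    using assms(1) by (auto simp: kboundary_def)
  have "kchain S (Suc n) (\<lambda>T. r * w1 T)" using w1(1) assms(2) by (auto simp: kchain_def intro: Smult)
  moreover have "r * a T - kdiff x (\<lambda>T. r * w1 T) T \<in> I" for T
    using Imult[OF assms(2) w1(2)[of T]] by (simp add: kdiff_smult algebra_simps)
  ultimately show ?thesis unfolding kboundary_def by blast
qed

lemma kboundary_zero: "kboundary S I x n (\<lambda>T. 0)"
proof -
  have "kchain S (Suc n) (\<lambda>T. 0)" by (simp add: kchain_def S0)
  moreover have "0 - kdiff x (\<lambda>T. 0) T \<in> I" for T by (simp add: kdiff_def I0)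
  ultimately show ?thesis unfolding kboundary_def by blast
qed

lemma kboundary_x:
  assumes z: "kcycle S I x n z"
  shows "kboundary S I x n (\<lambda>T. x i * z T)"
proof -
  have zc: "kchain S n z" and dz: "\<And>T. kdiff x z T \<in> I" using z by (auto simp: kcycle_def)
  have "kchain S (Suc n) (wedge i z)"
    unfolding kchain_def
  proof (intro allI conjI impI)
    fix T :: "'v set"
    have "z U \<in> S" for U using zc S0 by (cases "card U = n") (auto simp: kchain_def)
    then show "wedge i z T \<in> S" using ksgn_S by (auto simp: wedge_def intro: Smult S0)
    assume "card T \<noteq> Suc n"
    moreover have "i \<in> T \<Longrightarrow> card T > 0" by (auto simp: card_gt_0_iff)
    ultimately have "i \<in> T \<Longrightarrow> card (T - {i}) \<noteq> n" by (auto simp: card_Diff_singleton)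
    then show "wedge i z T = 0" using zc by (auto simp: wedge_def kchain_def)
  qed
  moreover have "x i * z T - kdiff x (wedge i z) T \<in> I" for T
  proof -
    have "x i * z T - kdiff x (wedge i z) T = wedge i (kdiff x z) T"
      using homotopy[of x i z T] by (simp add: algebra_simps)
    also have "\<dots> \<in> I" unfolding wedge_def using dz ksgn_S by (auto intro: Imult I0)
    finally show ?thesis .
  qed
  ultimately show ?thesis unfolding kboundary_def by blast
qed

lemma kboundary_annih:
  fixes \<phi> :: "('v, 'k::comm_ring_1) mpoly \<Rightarrow> 'a"
  assumes z: "kcycle S I x n z"
    and hadd: "\<And>p q. \<phi> (p + q) = \<phi> p + \<phi> q"
    and hmult: "\<And>p q. \<phi> (p * q) = \<phi> p * \<phi> q"
    and hdiff: "\<And>p q. \<phi> (p - q) = \<phi> p - \<phi> q"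
    and hS: "\<And>p. \<phi> p \<in> S"
    and hX: "\<And>i. \<phi> (Xvar i) = x i"
  shows "kboundary S I x n (\<lambda>T. \<phi> (p - Poly_Mapping.single 0 (eval0 p)) * z T)"
proof (induction p rule: pm_induct)
  case zero
  have "\<phi> 0 = 0" using hdiff[of 0 0] by simp
  then show ?case using kboundary_zero by (simp add: eval0_def)
next
  case (single k a)
  show ?case
  proof (cases "k = 0")
    case True
    have "\<phi> 0 = 0" using hdiff[of 0 0] by simp
    then show ?thesis using kboundary_zero True by (simp add: eval0_single)
  next
    case False
    then obtain i where i: "Poly_Mapping.lookup k i \<noteq> 0"
      by (metis poly_mapping_eqI lookup_zero)
    have kk: "k = Poly_Mapping.single i 1 + (k - Poly_Mapping.single i 1)"
      using i by (intro poly_mapping_eqI) (auto simp: lookup_add lookup_minus lookup_single when_def)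
    have "Poly_Mapping.single k a = Xvar i * Poly_Mapping.single (k - Poly_Mapping.single i 1) a"
      unfolding Xvar_def mult_single by (subst kk) simp
    then have e: "\<phi> (Poly_Mapping.single k a - Poly_Mapping.single 0 (eval0 (Poly_Mapping.single k a)))
       = \<phi> (Poly_Mapping.single (k - Poly_Mapping.single i 1) a) * x i"
    proof -
      assume h: "Poly_Mapping.single k a = Xvar i * Poly_Mapping.single (k - Poly_Mapping.single i 1) a"
      have "Poly_Mapping.single k a - Poly_Mapping.single 0 (eval0 (Poly_Mapping.single k a)) = Poly_Mapping.single k a"
        using False by (simp add: eval0_single)
      then show ?thesis unfolding h by (simp only: hmult hX mult.commute)
    qed
    have "kboundary S I x n (\<lambda>T. \<phi> (Poly_Mapping.single (k - Poly_Mapping.single i 1) a) * (x i * z T))"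
      by (intro kboundary_smult kboundary_x z hS)
    then show ?thesis unfolding e by (simp add: mult.assoc)
  qed
next
  case (add p q)
  have eq: "(p + q) - Poly_Mapping.single 0 (eval0 (p + q)) =
     (p - Poly_Mapping.single 0 (eval0 p)) + (q - Poly_Mapping.single 0 (eval0 q))"
    by (simp add: eval0_add single_add)
  have e: "\<phi> ((p + q) - Poly_Mapping.single 0 (eval0 (p + q))) =
     \<phi> (p - Poly_Mapping.single 0 (eval0 p)) + \<phi> (q - Poly_Mapping.single 0 (eval0 q))"
    unfolding eq by (rule hadd)
  show ?case unfolding e distrib_right by (rule kboundary_add[OF add])
qed

end



lemma lam_add: "lam (p + q) = lam p + lam q" by (simp add: lam_def)
lemma lam_mult: "lam (p * q) = lam p * lam q" by (simp add: lam_def)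
lemma lam_diff: "lam (p - q) = lam p - lam q" by (simp add: lam_def)
lemma lam_zero: "lam 0 = 0" by (simp add: lam_def Zero_fract_def)
lemma lam_one: "lam 1 = 1" by (simp add: lam_def One_fract_def)
lemma lam_uminus: "lam (- p) = - lam p" by (simp add: lam_def)
lemma lam_sum: "lam (sum f A) = (\<Sum>a\<in>A. lam (f a))"
  by (induction A rule: infinite_finite_induct) (auto simp: lam_zero lam_add)
lemma lam_power: "lam (p ^ k) = lam p ^ k"
  by (induction k) (auto simp: lam_one lam_mult)

lemma eval0_zero: "eval0 0 = 0" by (simp add: eval0_def)

lemma eval0_prod: "eval0 (prod (f::_ \<Rightarrow> ('v,'k::field) mpoly) A) = (\<Prod>a\<in>A. eval0 (f a))"
  by (induction A rule: infinite_finite_induct) (auto simp: eval0_one eval0_mult)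
lemma locR_lam: "lam (p::('v::linorder,'k::field) mpoly) \<in> locR"
proof -
  have "eval0 (1::('v,'k) mpoly) \<noteq> 0" by (simp add: eval0_one)
  then have "\<exists>a b. lam p = Fract a b \<and> eval0 b \<noteq> 0"
    unfolding lam_def by blast
  then show ?thesis unfolding locR_def by blast
qed

lemma locR_add: "a \<in> locR \<Longrightarrow> b \<in> locR \<Longrightarrow> a + b \<in> locR"
proof -
  assume "a \<in> locR" "b \<in> locR"
  then obtain p q p' q' where "a = Fract p q" "eval0 q \<noteq> 0" "b = Fract p' q'" "eval0 q' \<noteq> 0"
    by (auto simp: locR_def)
  moreover then have "q \<noteq> 0" "q' \<noteq> 0" by (auto simp: eval0_zero)
  ultimately show ?thesis unfolding locR_def
    by (intro CollectI exI[of _ "p * q' + p' * q"] exI[of _ "q * q'"]) (simp add: eval0_mult)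
qed

lemma locR_mult: "a \<in> locR \<Longrightarrow> b \<in> locR \<Longrightarrow> a * b \<in> locR"
proof -
  assume "a \<in> locR" "b \<in> locR"
  then obtain p q p' q' where "a = Fract p q" "eval0 q \<noteq> 0" "b = Fract p' q'" "eval0 q' \<noteq> 0"
    by (auto simp: locR_def)
  then show ?thesis unfolding locR_def
    by (intro CollectI exI[of _ "p * p'"] exI[of _ "q * q'"]) (simp add: eval0_mult)
qed

lemma kos_locR: "ideal_of locR I \<Longrightarrow> kos locR I"
  unfolding kos_def using locR_lam[of 0] locR_lam[of 1] locR_lam[of "-1"]
  by (auto simp: lam_zero lam_one lam_uminus intro: locR_add locR_mult)

lemma kos_UNIV: "ideal_of UNIV J \<Longrightarrow> kos (UNIV::('v,'k::comm_ring_1) mpoly set) J"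
  unfolding kos_def by auto

lemma common_denom:
  fixes f :: "'v::{finite,linorder} set \<Rightarrow> ('v, 'k::field) mpoly fract"
  assumes "\<And>T. f T \<in> locR"
  shows "\<exists>Q p. eval0 Q \<noteq> 0 \<and> (\<forall>T. lam Q * f T = lam (p T))"
proof -
  have "\<forall>T. \<exists>pq. f T = Fract (fst pq) (snd pq) \<and> eval0 (snd pq) \<noteq> 0"
    using assms unfolding locR_def by fastforce
  then obtain pq where pq: "\<And>T. f T = Fract (fst (pq T)) (snd (pq T))" "\<And>T. eval0 (snd (pq T)) \<noteq> 0"
    by metis
  define Q where "Q = (\<Prod>T\<in>UNIV. snd (pq T))"
  define p where "p T = fst (pq T) * (\<Prod>T'\<in>UNIV - {T}. snd (pq T'))" for T
  have "eval0 Q \<noteq> 0" unfolding Q_def eval0_prod using pq(2) by simp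
  moreover have "lam Q * f T = lam (p T)" for T
  proof -
    have q0: "snd (pq T) \<noteq> 0" using pq(2)[of T] by (auto simp: eval0_zero)
    have "Q = snd (pq T) * (\<Prod>T'\<in>UNIV - {T}. snd (pq T'))"
      unfolding Q_def by (subst prod.remove[of _ T]) auto
    then have "lam Q * f T = Fract (snd (pq T) * p T) (snd (pq T) * 1)"
      unfolding lam_def pq(1) p_def by (simp add: mult_ac)
    also have "\<dots> = lam (p T)" unfolding lam_def by (rule mult_fract_cancel[OF q0])
    finally show ?thesis .
  qed
  ultimately show ?thesis by blast
qed

lemma kboundary_eq: "kboundary S I x n a \<Longrightarrow> (\<And>T. a T = b T) \<Longrightarrow> kboundary S I x n b"
proof -
  assume "kboundary S I x n a" "\<And>T. a T = b T"
  moreover then have "a = b" by auto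
  ultimately show ?thesis by simp
qed

lemma kdiff_lam: "kdiff (\<lambda>i. lam (Xvar i)) (\<lambda>S. lam (c S)) T = lam (kdiff Xvar c T)"
  by (simp add: kdiff_def lam_sum lam_mult lam_power lam_uminus lam_one)



theorem mainTheorem14:
  fixes I :: "('v::{finite,linorder}, 'k::field) mpoly fract set"
    and Ibar :: "('v, 'k) mpoly set"
  assumes I: "ideal_of locR I"
    and Ibar: "Ibar = {p. lam p \<in> I}"
  shows "ideal_of UNIV Ibar
    \<and> (\<forall>p q. lam p - lam q \<in> I \<longleftrightarrow> p - q \<in> Ibar)
    \<and> (\<forall>(c::'v set \<Rightarrow> ('v, 'k) mpoly) T. kdiff (\<lambda>i. lam (Xvar i)) (\<lambda>S. lam (c S)) T = lam (kdiff Xvar c T))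
    \<and> (\<forall>n z. kcycle UNIV Ibar Xvar n z \<and> kboundary locR I (\<lambda>i. lam (Xvar i)) n (\<lambda>T. lam (z T))
              \<longrightarrow> kboundary UNIV Ibar Xvar n z)
    \<and> (\<forall>n z. kcycle locR I (\<lambda>i. lam (Xvar i)) n z
              \<longrightarrow> (\<exists>z'. kcycle UNIV Ibar Xvar n z'
                     \<and> kboundary locR I (\<lambda>i. lam (Xvar i)) n (\<lambda>T. z T - lam (z' T))))"
proof -
  interpret L: kos locR I "\<lambda>i. lam (Xvar i)" by (rule kos_locR[OF I])
  have idl: "ideal_of UNIV Ibar"
    unfolding ideal_of_def Ibar using L.I0
    by (auto simp: lam_zero lam_add lam_mult intro!: L.Imult[OF locR_lam] L.Iadd)
  interpret P: kos UNIV Ibar Xvar by (rule kos_UNIV[OF idl])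
  have p2: "\<forall>p q. lam p - lam q \<in> I \<longleftrightarrow> p - q \<in> Ibar" by (simp add: Ibar lam_diff)
  have Cinv: "Poly_Mapping.single 0 (1 / c) * Poly_Mapping.single 0 c = (1::('v,'k) mpoly)" if "c \<noteq> 0" for c
    using that by (simp add: mult_single)
  have p4: "\<forall>n z. kcycle UNIV Ibar Xvar n z \<and> kboundary locR I (\<lambda>i. lam (Xvar i)) n (\<lambda>T. lam (z T))
              \<longrightarrow> kboundary UNIV Ibar Xvar n z"
  proof (intro allI impI, elim conjE)
    fix n z assume zc: "kcycle UNIV Ibar Xvar n z" and zb: "kboundary locR I (\<lambda>i. lam (Xvar i)) n (\<lambda>T. lam (z T))"
    obtain w where w: "kchain locR (Suc n) w" "\<And>T. lam (z T) - kdiff (\<lambda>i. lam (Xvar i)) w T \<in> I"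
      using zb unfolding kboundary_def by blast
    have "w T \<in> locR" for T using w(1) L.S0 by (cases "card T = Suc n") (auto simp: kchain_def)
    then obtain Q p where Q: "eval0 Q \<noteq> 0" "\<And>T. lam Q * w T = lam (p T)"
      using common_denom[of w] by blast
    define wb where "wb T = (if card T = Suc n then p T else 0)" for T
    have lwb: "lam (wb T) = lam Q * w T" for T
      using Q(2)[of T] w(1) by (auto simp: wb_def kchain_def lam_zero)
    have h1: "kboundary UNIV Ibar Xvar n (\<lambda>T. Q * z T)"
      unfolding kboundary_def
    proof (intro exI conjI allI)
      show "kchain UNIV (Suc n) wb" by (simp add: kchain_def wb_def)
      fix T
      have "lam (Q * z T - kdiff Xvar wb T) = lam Q * lam (z T) - kdiff (\<lambda>i. lam (Xvar i)) (\<lambda>S. lam (wb S)) T"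
        by (simp add: lam_diff lam_mult kdiff_lam)
      also have "kdiff (\<lambda>i. lam (Xvar i)) (\<lambda>S. lam (wb S)) T = lam Q * kdiff (\<lambda>i. lam (Xvar i)) w T"
        by (simp add: lwb kdiff_smult)
      finally have "lam (Q * z T - kdiff Xvar wb T) = lam Q * (lam (z T) - kdiff (\<lambda>i. lam (Xvar i)) w T)"
        by (simp add: algebra_simps)
      then show "Q * z T - kdiff Xvar wb T \<in> Ibar" using L.Imult[OF locR_lam w(2)] Ibar by simp
    qed
    have "kboundary UNIV Ibar Xvar n (\<lambda>T. (Q - Poly_Mapping.single 0 (eval0 Q)) * z T)"
      using P.kboundary_annih[OF zc, of id Q] by simp
    then have h2: "kboundary UNIV Ibar Xvar n (\<lambda>T. (-1) * ((Q - Poly_Mapping.single 0 (eval0 Q)) * z T))"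
      by (rule P.kboundary_smult) simp
    have "kboundary UNIV Ibar Xvar n
        (\<lambda>T. Q * z T + (-1) * ((Q - Poly_Mapping.single 0 (eval0 Q)) * z T))"
      by (rule P.kboundary_add[OF h1 h2])
    then have "kboundary UNIV Ibar Xvar n
        (\<lambda>T. Poly_Mapping.single 0 (1 / eval0 Q) * (Q * z T + (-1) * ((Q - Poly_Mapping.single 0 (eval0 Q)) * z T)))"
      by (rule P.kboundary_smult) simp
    then show "kboundary UNIV Ibar Xvar n z"
    proof (rule kboundary_eq)
      fix T
      have "Poly_Mapping.single 0 (1 / eval0 Q) * (Q * z T + (-1) * ((Q - Poly_Mapping.single 0 (eval0 Q)) * z T))
        = (Poly_Mapping.single 0 (1 / eval0 Q) * Poly_Mapping.single 0 (eval0 Q)) * z T"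
        by (simp add: algebra_simps)
      then show "Poly_Mapping.single 0 (1 / eval0 Q) * (Q * z T + (-1) * ((Q - Poly_Mapping.single 0 (eval0 Q)) * z T)) = z T"
        using Cinv[OF Q(1)] by simp
    qed
  qed
  have p5: "\<forall>n z. kcycle locR I (\<lambda>i. lam (Xvar i)) n z
              \<longrightarrow> (\<exists>z'. kcycle UNIV Ibar Xvar n z'
                     \<and> kboundary locR I (\<lambda>i. lam (Xvar i)) n (\<lambda>T. z T - lam (z' T)))"
  proof (intro allI impI)
    fix n z assume zc: "kcycle locR I (\<lambda>i. lam (Xvar i)) n z"
    have zch: "kchain locR n z" and dz: "\<And>T. kdiff (\<lambda>i. lam (Xvar i)) z T \<in> I"
      using zc by (auto simp: kcycle_def)
    have "z T \<in> locR" for T using zch L.S0 by (cases "card T = n") (auto simp: kchain_def)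
    then obtain Q p where Q: "eval0 Q \<noteq> 0" "\<And>T. lam Q * z T = lam (p T)"
      using common_denom[of z] by blast
    define Ci :: "('v, 'k) mpoly" where "Ci = Poly_Mapping.single 0 (1 / eval0 Q)"
    define z' where "z' T = (if card T = n then Ci * p T else 0)" for T
    have lz': "lam (z' T) = lam Ci * (lam Q * z T)" for T
      using Q(2)[of T] zch by (auto simp: z'_def kchain_def lam_zero lam_mult)
    have "kcycle UNIV Ibar Xvar n z'"
      unfolding kcycle_def
    proof (intro conjI allI)
      show "kchain UNIV n z'" by (simp add: kchain_def z'_def)
      fix T
      have "lam (kdiff Xvar z' T) = kdiff (\<lambda>i. lam (Xvar i)) (\<lambda>S. lam (z' S)) T"
        by (simp add: kdiff_lam)
      also have "\<dots> = lam Ci * (lam Q * kdiff (\<lambda>i. lam (Xvar i)) z T)"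
        by (simp add: lz' kdiff_smult)
      also have "\<dots> \<in> I" by (intro L.Imult locR_lam dz)
      finally show "kdiff Xvar z' T \<in> Ibar" using Ibar by simp
    qed
    moreover have "kboundary locR I (\<lambda>i. lam (Xvar i)) n (\<lambda>T. z T - lam (z' T))"
    proof -
      have hb: "kboundary locR I (\<lambda>i. lam (Xvar i)) n (\<lambda>T. lam (Q - Poly_Mapping.single 0 (eval0 Q)) * z T)"
        by (rule L.kboundary_annih[OF zc]) (auto simp: lam_add lam_mult lam_diff locR_lam)
      have "kboundary locR I (\<lambda>i. lam (Xvar i)) n
          (\<lambda>T. lam (- Ci) * (lam (Q - Poly_Mapping.single 0 (eval0 Q)) * z T))"
        by (rule L.kboundary_smult[OF hb locR_lam])
      then show ?thesis
      proof (rule kboundary_eq)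
        fix T
        have c1: "lam Ci * lam (Poly_Mapping.single 0 (eval0 Q)) = 1"
          unfolding Ci_def lam_mult[symmetric] Cinv[OF Q(1)] lam_one ..
        have "lam (- Ci) * (lam (Q - Poly_Mapping.single 0 (eval0 Q)) * z T)
            = (lam Ci * lam (Poly_Mapping.single 0 (eval0 Q))) * z T - lam Ci * (lam Q * z T)"
          by (simp add: lam_uminus lam_diff algebra_simps)
        then show "lam (- Ci) * (lam (Q - Poly_Mapping.single 0 (eval0 Q)) * z T) = z T - lam (z' T)"
          unfolding c1 lz' by simp
      qed
    qed
    ultimately show "\<exists>z'. kcycle UNIV Ibar Xvar n z' \<and> kboundary locR I (\<lambda>i. lam (Xvar i)) n (\<lambda>T. z T - lam (z' T))"
      by blast
  qed
  show ?thesis using idl p2 p4 p5 kdiff_lam by blast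
qed


end
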